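(* Fix a formula $A$ and an annotated unary context $\Gamma\{-\}$. If $\vdash^A \Gamma\{\Diamond A^\perp_\emptyset\}$, then $\vdash^A \Gamma\{\}$.
   Context: Formulas: over a countable set of atoms $\alpha$ with duals $\alpha^\perp$, $A,B ::= \alpha \mid \alpha^\perp \mid A\land B \mid A\lor B \mid \Box A \mid \Diamond A$; negation $A^\perp$ by De Morgan duality ($(\alpha)^\perp=\alpha^\perp$, $(\alpha^\perp)^\perp=\alpha$, $\land/\lor$ dual, $(\Box A)^\perp=\Diamond A^\perp$, $(\Diamond A)^\perp=\Box A^\perp$). Annotated sequents: $\Gamma,\Delta ::= \cdot \mid \Gamma, C \mid \Gamma, \Diamond A_\Sigma \mid \Gamma,[\Delta]_B$, where $C$ is a formula not of the form $\Diamond A$, $\Sigma$ is a finite set of formulas (annotation set) and $B$ a formula (bracket annotation); sequents are taken up to exchange. Annotated unary contexts $\Gamma\{-\}$ (one hole) are defined analogously, $\Gamma\{\Delta\}$ is hole-filling, $\Gamma\{\}=\Gamma\{\cdot\}$. Annotated rules (whenever an active formula in a premise is a $\Diamond$-formula, its annotation is simply discarded): (id) $\Gamma\{\alpha^\perp,\alpha\}$, provided every $\Diamond$-formula occurrence in it has annotation $\emptyset$; ($\land$) from $\Gamma_1\{A\}$ and $\Gamma_2\{B\}$ infer $\Gamma\{A\land B\}$; ($\lor$) from $\Gamma\{A,B\}$ infer $\Gamma\{A\lor B\}$; ($\Box$) from $\Gamma\{[\Diamond A^\perp_\Sigma, A]_A\}$ infer $\Gamma\{\Box A\}$; ($\Diamond$)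 from $\Gamma\{\Delta\{[\Delta',A]_B\},\Diamond A_\Sigma\}$ infer $\Gamma\{\Delta\{[\Delta']_B\},\Diamond A_{\Sigma\cup\{B\}}\}$ (for any unary context $\Delta\{-\}$, possibly of depth $0$); (cut) from $\Gamma_1\{A\}$ and $\Gamma_2\{A^\perp\}$ infer $\Gamma\{\}$. In the two-premise rules, $\Gamma_1\{-\},\Gamma_2\{-\},\Gamma\{-\}$ are identical except for annotation sets of $\Diamond$-formula occurrences (bracket annotations coincide), and each $\Diamond$-formula occurrence in $\Gamma\{-\}$ has as annotation the union of the annotations of the corresponding occurrences in $\Gamma_1,\Gamma_2$. Fix a formula $A$; $\vdash^A\Gamma$ means the annotated sequent $\Gamma$ is derivable with the annotated rules (id), ($\land$), ($\lor$), ($\Box$), ($\Diamond$) together with those instances of (cut) whose cut formula is $A$. Convention: annotations not displayed in a statement (on $\Diamond$-formulas or brackets) are arbitrary; bracket annotations are the same in hypothesis and conclusion, while undisplayed $\Diamond$-annotations in the conclusion are existentially quantified. *)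

theory Defs
  imports Main "HOL-Library.Multiset" "HOL-Library.FSet"
begin

text \<open>Formulas over atoms (natural numbers) and their duals, in negation normal form.\<close>
datatype fm = At nat | NAt nat | And fm fm | Or fm fm | Box fm | Dia fm

primrec neg :: "fm \<Rightarrow> fm" where
  "neg (At a) = NAt a"
| "neg (NAt a) = At a"
| "neg (And A B) = Or (neg A) (neg B)"
| "neg (Or A B) = And (neg A) (neg B)"
| "neg (Box A) = Dia (neg A)"
| "neg (Dia A) = Box (neg A)"

text \<open>Items of annotated sequents: a formula C not of the form Dia A (Fm C),
  an annotated diamond formula Dia A with annotation Sigma (Di A Sigma), or a bracket
  [Delta]_B (Br Delta B).  Annotated sequents are multisets of items (exchange).\<close>
datatype item = Fm fm | Di fm "fm fset" | Br "item multiset" fm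

type_synonym seq = "item multiset"

primrec wf_item :: "item \<Rightarrow> bool" where
  "wf_item (Fm C) = (\<forall>B. C \<noteq> Dia B)"
| "wf_item (Di A S) = True"
| "wf_item (Br M B) = (\<forall>b\<in>set_mset (image_mset wf_item M). b)"

primrec empty_ann :: "item \<Rightarrow> bool" where
  "empty_ann (Fm C) = True"
| "empty_ann (Di A S) = (S = {||})"
| "empty_ann (Br M B) = (\<forall>b\<in>set_mset (image_mset empty_ann M). b)"

text \<open>Erase all Dia-annotations (used to compare sequents up to Dia-annotations).\<close>
primrec erase :: "item \<Rightarrow> item" where
  "erase (Fm C) = Fm C"
| "erase (Di A S) = Di A {||}"
| "erase (Br M B) = Br (image_mset erase M) B"

text \<open>Annotated unary contexts: Hole M is  M, {-} ; InBr M c B is  M, [c{-}]_B.\<close>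
datatype ctx = Hole seq | InBr seq ctx fm

primrec fill :: "ctx \<Rightarrow> seq \<Rightarrow> seq" where
  "fill (Hole M) X = M + X"
| "fill (InBr M c B) X = M + {# Br (fill c X) B #}"

primrec erase_ctx :: "ctx \<Rightarrow> ctx" where
  "erase_ctx (Hole M) = Hole (image_mset erase M)"
| "erase_ctx (InBr M c B) = InBr (image_mset erase M) (erase_ctx c) B"

text \<open>x represents formula A as an item in a premise (Dia-annotation arbitrary).\<close>
definition rep :: "fm \<Rightarrow> item \<Rightarrow> bool" where
  "rep A x = (case A of Dia B \<Rightarrow> (\<exists>S. x = Di B S) | _ \<Rightarrow> x = Fm A)"

inductive merge_item :: "item \<Rightarrow> item \<Rightarrow> item \<Rightarrow> bool"
  and merge_ms :: "seq \<Rightarrow> seq \<Rightarrow> seq \<Rightarrow> bool" where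
  "merge_item (Fm C) (Fm C) (Fm C)"
| "merge_item (Di A S1) (Di A S2) (Di A (S1 |\<union>| S2))"
| "merge_ms M1 M2 M \<Longrightarrow> merge_item (Br M1 B) (Br M2 B) (Br M B)"
| "merge_ms {#} {#} {#}"
| "merge_item x1 x2 x \<Longrightarrow> merge_ms M1 M2 M \<Longrightarrow>
     merge_ms (add_mset x1 M1) (add_mset x2 M2) (add_mset x M)"

inductive merge_ctx :: "ctx \<Rightarrow> ctx \<Rightarrow> ctx \<Rightarrow> bool" where
  "merge_ms M1 M2 M \<Longrightarrow> merge_ctx (Hole M1) (Hole M2) (Hole M)"
| "merge_ms M1 M2 M \<Longrightarrow> merge_ctx c1 c2 c \<Longrightarrow>
     merge_ctx (InBr M1 c1 B) (InBr M2 c2 B) (InBr M c B)"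

inductive deriv :: "fm \<Rightarrow> seq \<Rightarrow> bool" for CA :: fm where
  ax: "\<forall>x\<in>set_mset (fill G {# Fm (NAt a), Fm (At a) #}). wf_item x \<Longrightarrow>
       \<forall>x\<in>set_mset (fill G {# Fm (NAt a), Fm (At a) #}). empty_ann x \<Longrightarrow>
       deriv CA (fill G {# Fm (NAt a), Fm (At a) #})"
| conj: "merge_ctx G1 G2 G \<Longrightarrow> rep A x \<Longrightarrow> rep B y \<Longrightarrow>
       deriv CA (fill G1 {#x#}) \<Longrightarrow> deriv CA (fill G2 {#y#}) \<Longrightarrow>
       deriv CA (fill G {# Fm (And A B) #})"
| disj: "rep A x \<Longrightarrow> rep B y \<Longrightarrow> deriv CA (fill G {#x, y#}) \<Longrightarrow>
       deriv CA (fill G {# Fm (Or A B) #})"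
| box: "rep A x \<Longrightarrow> deriv CA (fill G {# Br {# Di (neg A) S, x #} A #}) \<Longrightarrow>
       deriv CA (fill G {# Fm (Box A) #})"
| dia: "rep A x \<Longrightarrow>
       deriv CA (fill G (add_mset (Di A S) (fill D {# Br (add_mset x M) B #}))) \<Longrightarrow>
       deriv CA (fill G (add_mset (Di A (finsert B S)) (fill D {# Br M B #})))"
| cut: "merge_ctx G1 G2 G \<Longrightarrow> rep CA x \<Longrightarrow> rep (neg CA) y \<Longrightarrow>
       deriv CA (fill G1 {#x#}) \<Longrightarrow> deriv CA (fill G2 {#y#}) \<Longrightarrow>
       deriv CA (fill G {#})"

end

theory Submission
  imports Defs
begin

definition isE :: "item \<Rightarrow> bool" where "isE x = (\<exists>A. x = Di A {||})"

inductive dli :: "item \<Rightarrow> item \<Rightarrow> bool" where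
  dF: "dli (Fm C) (Fm C)"
| dD: "dli (Di A S) (Di A S)"
| dB: "M = K + L \<Longrightarrow> \<forall>x\<in>#K. isE x \<Longrightarrow> rel_mset dli L N \<Longrightarrow> dli (Br M B) (Br N B)"
monos multiset.rel_mono


definition dlm :: "seq \<Rightarrow> seq \<Rightarrow> bool" where
  "dlm M N = (\<exists>K L. M = K + L \<and> (\<forall>x\<in>#K. isE x) \<and> rel_mset dli L N)"

lemma rel_union: "rel_mset R A B \<Longrightarrow> rel_mset R C D \<Longrightarrow> rel_mset R (A+C) (B+D)"
  by (induction rule: rel_mset_induct) (auto intro: rel_mset_Plus)

lemma rel_split: "rel_mset R (L1+L2) N \<Longrightarrow> \<exists>N1 N2. N = N1+N2 \<and> rel_mset R L1 N1 \<and> rel_mset R L2 N2"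
proof (induction L1 arbitrary: N)
  case empty
  then show ?case using rel_mset_Zero by fastforce
next
  case (add a L1)
  then obtain N0 b where "N = add_mset b N0" "R a b" "rel_mset R (L1+L2) N0"
    using msed_rel_invL[of R a "L1+L2" N] by auto
  with add.IH obtain N1 N2 where "N0 = N1+N2" "rel_mset R L1 N1" "rel_mset R L2 N2" by blast
  then show ?case using \<open>N = _\<close> \<open>R a b\<close> by (intro exI[of _ "add_mset b N1"] exI[of _ N2]) (auto intro: rel_mset_Plus)
qed

lemma ms_split4:
  fixes K L M N :: "'a multiset"
  assumes "K + L = M + N"
  shows "\<exists>K1 K2 L1 L2. K = K1+K2 \<and> L = L1+L2 \<and> M = K1+L1 \<and> N = K2+L2"
proof -
  define K1 where "K1 = K \<inter># M"
  define L1 where "L1 = M - K1"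
  define K2 where "K2 = K - K1"
  define L2 where "L2 = L - L1"
  have c: "count K x + count L x = count M x + count N x" for x
    using assms by (metis count_union)
  show ?thesis
    apply (rule exI[of _ K1], rule exI[of _ K2], rule exI[of _ L1], rule exI[of _ L2])
    using c unfolding K1_def L1_def K2_def L2_def multiset_eq_iff
    apply (auto simp: count_inter_mset)
    subgoal for a using c[of a] by arith
    subgoal for a using c[of a] by arith
    done
qed

lemma dlm_union: "dlm A B \<Longrightarrow> dlm C D \<Longrightarrow> dlm (A+C) (B+D)"
proof -
  assume "dlm A B" "dlm C D"
  then obtain K L K' L' where "A = K + L" "\<forall>x\<in>#K. isE x" "rel_mset dli L B"
     "C = K' + L'" "\<forall>x\<in>#K'. isE x" "rel_mset dli L' D" unfolding dlm_def by blast
  then show ?thesis unfolding dlm_def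
    by (intro exI[of _ "K+K'"] exI[of _ "L+L'"]) (auto simp: rel_union)
qed

lemma dlm_split: "dlm (M+N) Y \<Longrightarrow> \<exists>Y1 Y2. Y = Y1+Y2 \<and> dlm M Y1 \<and> dlm N Y2"
proof -
  assume "dlm (M+N) Y"
  then obtain K L where h: "M+N = K+L" "\<forall>x\<in>#K. isE x" "rel_mset dli L Y" unfolding dlm_def by blast
  then obtain K1 K2 L1 L2 where s: "K = K1+K2" "L = L1+L2" "M = K1+L1" "N = K2+L2"
    using ms_split4[of K L M N] by metis
  then obtain Y1 Y2 where "Y = Y1+Y2" "rel_mset dli L1 Y1" "rel_mset dli L2 Y2"
    using rel_split h(3) by blast
  moreover have "dlm M Y1" unfolding dlm_def using s h(2) \<open>rel_mset dli L1 Y1\<close>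
    by (intro exI[of _ K1] exI[of _ L1]) auto
  moreover have "dlm N Y2" unfolding dlm_def using s h(2) \<open>rel_mset dli L2 Y2\<close>
    by (intro exI[of _ K2] exI[of _ L2]) auto
  ultimately show ?thesis by blast
qed

lemma dli_refl: "dli x x"
proof (induction x)
  case (Br M B)
  have "rel_mset dli M M"
    using Br by (induction M) (auto intro: rel_mset_Plus rel_mset_Zero)
  then show ?case by (intro dB[of M "{#}" M]) auto
qed (auto intro: dli.intros)

lemma dlm_refl: "dlm M M"
proof -
  have "rel_mset dli M M" by (induction M) (auto intro: rel_mset_Plus rel_mset_Zero dli_refl)
  then show ?thesis unfolding dlm_def by (intro exI[of _ "{#}"] exI[of _ M]) auto
qed

lemma dlm_single: "dlm {#x#} Y \<Longrightarrow> (\<exists>y. Y = {#y#} \<and> dli x y) \<or> (Y = {#} \<and> isE x)"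
proof -
  assume "dlm {#x#} Y"
  then obtain K L where h: "{#x#} = K + L" "\<forall>x\<in>#K. isE x" "rel_mset dli L Y"
    unfolding dlm_def by blast
  show "(\<exists>y. Y = {#y#} \<and> dli x y) \<or> (Y = {#} \<and> isE x)"
  proof (cases "K = {#}")
    case True
    then have "L = {#x#}" using h by simp
    then show ?thesis using h(3) msed_rel_invL[of dli x "{#}" Y] by auto
  next
    case False
    then have "K = {#x#}" "L = {#}" using h(1) by (metis add_eq_conv_ex union_is_single)+
    then show ?thesis using h by auto
  qed
qed

lemma dlm_single_intro: "dli x y \<Longrightarrow> dlm {#x#} {#y#}"
  unfolding dlm_def by (intro exI[of _ "{#}"] exI[of _ "{#x#}"]) (auto intro: rel_mset_Plus rel_mset_Zero)

lemma dlm_del: "isE x \<Longrightarrow> dlm {#x#} {#}"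
  unfolding dlm_def by (intro exI[of _ "{#x#}"] exI[of _ "{#}"]) (auto intro: rel_mset_Zero)

lemma dli_Br: "dlm M N \<Longrightarrow> dli (Br M B) (Br N B)"
  unfolding dlm_def by (auto intro: dB)

lemma dli_inv: "dli x y \<Longrightarrow>
   (case x of Fm C \<Rightarrow> y = Fm C | Di A S \<Rightarrow> y = Di A S | Br M B \<Rightarrow> (\<exists>N. y = Br N B \<and> dlm M N))"
  by (erule dli.cases) (auto simp: dlm_def)


lemma rel_back: "rel_mset R L N \<Longrightarrow> y \<in># N \<Longrightarrow> \<exists>x\<in>#L. R x y"
  by (induction rule: rel_mset_induct) auto

lemma dli_pres: "dli x y \<Longrightarrow> (wf_item x \<longrightarrow> wf_item y) \<and> (empty_ann x \<longrightarrow> empty_ann y)"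
proof (induction rule: dli.induct)
  case (dB M K L N B)
  show ?case
  proof (intro conjI impI)
    assume a: "wf_item (Br M B)"
    have "\<forall>y\<in>#N. wf_item y"
    proof
      fix y assume "y \<in># N"
      then obtain x where x: "x \<in># L" "dli x y \<and> (wf_item x \<longrightarrow> wf_item y) \<and> (empty_ann x \<longrightarrow> empty_ann y)"
        using rel_back[OF dB(3)] by blast
      have "x \<in># M" using x(1) dB(1) by simp
      then have "wf_item x" using a by simp
      then show "wf_item y" using x(2) by blast
    qed
    then show "wf_item (Br N B)" by simp
  next
    assume a: "empty_ann (Br M B)"
    have "\<forall>y\<in>#N. empty_ann y"
    proof
      fix y assume "y \<in># N"
      then obtain x where x: "x \<in># L" "dli x y \<and> (wf_item x \<longrightarrow> wf_item y) \<and> (empty_ann x \<longrightarrow> empty_ann y)"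
        using rel_back[OF dB(3)] by blast
      have "x \<in># M" using x(1) dB(1) by simp
      then have "empty_ann x" using a by simp
      then show "empty_ann y" using x(2) by blast
    qed
    then show "empty_ann (Br N B)" by simp
  qed
qed auto

lemma dlm_pres: "dlm M N \<Longrightarrow> \<forall>x\<in>#M. P x \<Longrightarrow> (\<And>x y. dli x y \<Longrightarrow> P x \<Longrightarrow> P y) \<Longrightarrow> \<forall>y\<in>#N. P y"
proof -
  assume a: "dlm M N" "\<forall>x\<in>#M. P x" and r: "\<And>x y. dli x y \<Longrightarrow> P x \<Longrightarrow> P y"
  then obtain K L where k: "M = K + L" "rel_mset dli L N" unfolding dlm_def by blast
  show ?thesis
  proof
    fix y assume "y \<in># N"
    then obtain x where x: "x \<in># L" "dli x y" using rel_back[OF k(2)] by blast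
    then have "P x" using a(2) k(1) by simp
    then show "P y" using r x(2) by blast
  qed
qed

primrec dlc :: "ctx \<Rightarrow> ctx \<Rightarrow> bool" where
  "dlc (Hole M) G' = (\<exists>N. G' = Hole N \<and> dlm M N)"
| "dlc (InBr M c B) G' = (\<exists>N c'. G' = InBr N c' B \<and> dlm M N \<and> dlc c c')"

lemma isE_Br[simp]: "\<not> isE (Br M B)" and isE_Fm[simp]: "\<not> isE (Fm C)"
  and isE_Di[simp]: "isE (Di A S) = (S = {||})"
  unfolding isE_def by auto

lemma fill_dec: "dlm (fill G X) Y \<Longrightarrow> \<exists>G' X'. Y = fill G' X' \<and> dlc G G' \<and> dlm X X'"
proof (induction G arbitrary: Y)
  case (Hole M)
  then obtain Y1 Y2 where "Y = Y1 + Y2" "dlm M Y1" "dlm X Y2" using dlm_split by fastforce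
  then show ?case by (intro exI[of _ "Hole Y1"] exI[of _ Y2]) auto
next
  case (InBr M c B)
  then obtain Y1 Y2 where y: "Y = Y1 + Y2" "dlm M Y1" "dlm {#Br (fill c X) B#} Y2"
    using dlm_split[of M "{#Br (fill c X) B#}" Y] by auto
  then obtain y where "Y2 = {#y#}" "dli (Br (fill c X) B) y" using dlm_single by fastforce
  then obtain N where "y = Br N B" "dlm (fill c X) N" using dli_inv by fastforce
  then obtain c' X' where "N = fill c' X'" "dlc c c'" "dlm X X'" using InBr.IH by blast
  then show ?case using y \<open>Y2 = _\<close> \<open>y = _\<close>
    by (intro exI[of _ "InBr Y1 c' B"] exI[of _ X']) auto
qed

lemma fill_comp: "dlc G G' \<Longrightarrow> dlm X X' \<Longrightarrow> dlm (fill G X) (fill G' X')"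
proof (induction G arbitrary: G')
  case (Hole M)
  then show ?case by (auto intro: dlm_union)
next
  case (InBr M c B)
  then obtain N c' where "G' = InBr N c' B" "dlm M N" "dlc c c'" by auto
  then have "dlm (fill c X) (fill c' X')" using InBr.IH[of c'] InBr.prems by blast
  then have "dlm (M + {#Br (fill c X) B#}) (N + {#Br (fill c' X') B#})"
    using dlm_union[OF \<open>dlm M N\<close> dlm_single_intro[OF dli_Br]] by blast
  then show ?case using \<open>G' = _\<close> by simp
qed

lemma dlc_refl: "dlc G G"
  by (induction G) (auto intro: dlm_refl)

lemma merge_isE: "merge_item x1 x2 x \<Longrightarrow> isE x \<Longrightarrow> isE x1 \<and> isE x2"
  by (erule merge_item.cases) (auto simp: isE_def)

lemma dlm_empty: "dlm {#} Y \<Longrightarrow> Y = {#}"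
  unfolding dlm_def by auto

lemma merge_dl:
  "(merge_item x1 x2 x \<longrightarrow> (\<forall>x'. dli x x' \<longrightarrow> (\<exists>y1 y2. merge_item y1 y2 x' \<and> dli x1 y1 \<and> dli x2 y2)))
   \<and> (merge_ms M1 M2 M \<longrightarrow> (\<forall>M'. dlm M M' \<longrightarrow> (\<exists>N1 N2. merge_ms N1 N2 M' \<and> dlm M1 N1 \<and> dlm M2 N2)))"
proof (induction rule: merge_item_merge_ms.induct)
  case (1 C)
  show ?case
  proof (intro allI impI)
    fix x' assume "dli (Fm C) x'"
    then have "x' = Fm C" using dli_inv by fastforce
    then show "\<exists>y1 y2. merge_item y1 y2 x' \<and> dli (Fm C) y1 \<and> dli (Fm C) y2"
      using dF merge_item_merge_ms.intros(1) by blast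
  qed
next
  case (2 A S1 S2)
  show ?case
  proof (intro allI impI)
    fix x' assume "dli (Di A (S1 |\<union>| S2)) x'"
    then have "x' = Di A (S1 |\<union>| S2)" using dli_inv by fastforce
    then show "\<exists>y1 y2. merge_item y1 y2 x' \<and> dli (Di A S1) y1 \<and> dli (Di A S2) y2"
      using dD merge_item_merge_ms.intros(2) by blast
  qed
next
  case (3 M1 M2 M B)
  show ?case
  proof (intro allI impI)
    fix x' assume "dli (Br M B) x'"
    then obtain N where "x' = Br N B" "dlm M N" using dli_inv by fastforce
    then obtain N1 N2 where "merge_ms N1 N2 N" "dlm M1 N1" "dlm M2 N2" using 3 by blast
    then show "\<exists>y1 y2. merge_item y1 y2 x' \<and> dli (Br M1 B) y1 \<and> dli (Br M2 B) y2"
      using \<open>x' = _\<close> by (intro exI[of _ "Br N1 B"] exI[of _ "Br N2 B"]) (auto intro: merge_item_merge_ms.intros dli_Br)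
  qed
next
  case 4
  show ?case
  proof (intro allI impI)
    fix M' assume "dlm {#} M'"
    then have "M' = {#}" using dlm_empty by blast
    then show "\<exists>N1 N2. merge_ms N1 N2 M' \<and> dlm {#} N1 \<and> dlm {#} N2"
      using merge_item_merge_ms.intros(4) dlm_refl by blast
  qed
next
  case (5 x1 x2 x M1 M2 M)
  show ?case
  proof (intro allI impI)
    fix M' assume "dlm (add_mset x M) M'"
    then have "dlm ({#x#} + M) M'" by simp
    then obtain Y1 Y2 where y: "M' = Y1 + Y2" "dlm {#x#} Y1" "dlm M Y2" using dlm_split by blast
    then obtain N1 N2 where n: "merge_ms N1 N2 Y2" "dlm M1 N1" "dlm M2 N2" using 5 by blast
    from y(2) consider (k) y where "Y1 = {#y#}" "dli x y" | (d) "Y1 = {#}" "isE x"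
      using dlm_single by blast
    then show "\<exists>N1 N2. merge_ms N1 N2 M' \<and> dlm (add_mset x1 M1) N1 \<and> dlm (add_mset x2 M2) N2"
    proof cases
      case k
      then obtain y1 y2 where "merge_item y1 y2 y" "dli x1 y1" "dli x2 y2" using 5 by blast
      then show ?thesis using n y k
        using dlm_union[OF dlm_single_intro[of x1 y1] n(2)] dlm_union[OF dlm_single_intro[of x2 y2] n(3)]
        by (intro exI[of _ "add_mset y1 N1"] exI[of _ "add_mset y2 N2"]) (auto intro: merge_item_merge_ms.intros)
    next
      case d
      then have "isE x1" "isE x2" using merge_isE 5 by blast+
      then show ?thesis using n y d
        using dlm_union[OF dlm_del[of x1] n(2)] dlm_union[OF dlm_del[of x2] n(3)]
        by (intro exI[of _ N1] exI[of _ N2]) auto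
    qed
  qed
qed

lemma merge_ctx_dl: "merge_ctx G1 G2 G \<Longrightarrow> dlc G G' \<Longrightarrow> \<exists>G1' G2'. merge_ctx G1' G2' G' \<and> dlc G1 G1' \<and> dlc G2 G2'"
proof (induction arbitrary: G' rule: merge_ctx.induct)
  case (1 M1 M2 M)
  then obtain N where "G' = Hole N" "dlm M N" by auto
  then obtain N1 N2 where "merge_ms N1 N2 N" "dlm M1 N1" "dlm M2 N2" using merge_dl 1 by blast
  then show ?case using \<open>G' = _\<close> by (intro exI[of _ "Hole N1"] exI[of _ "Hole N2"]) (auto intro: merge_ctx.intros)
next
  case (2 M1 M2 M c1 c2 c B)
  then obtain N c' where "G' = InBr N c' B" "dlm M N" "dlc c c'" by auto
  then obtain N1 N2 where "merge_ms N1 N2 N" "dlm M1 N1" "dlm M2 N2" using merge_dl 2 by blast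
  moreover obtain c1' c2' where "merge_ctx c1' c2' c'" "dlc c1 c1'" "dlc c2 c2'" using 2 \<open>dlc c c'\<close> by blast
  ultimately show ?case using \<open>G' = _\<close> by (intro exI[of _ "InBr N1 c1' B"] exI[of _ "InBr N2 c2' B"]) (auto intro: merge_ctx.intros)
qed

lemma dlm_Fm: "dlm {#Fm a#} Y \<Longrightarrow> Y = {#Fm a#}"
  using dlm_single[of "Fm a" Y] dli_inv[of "Fm a"] by auto

lemma dlm_Fm2: "dlm {#Fm a, Fm b#} Y \<Longrightarrow> Y = {#Fm a, Fm b#}"
proof -
  assume "dlm {#Fm a, Fm b#} Y"
  moreover have e: "{#Fm a#} + {#Fm b#} = {#Fm a, Fm b#}" by (simp add: add_mset_commute)
  ultimately have "dlm ({#Fm a#} + {#Fm b#}) Y" by metis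
  then obtain Y1 Y2 where "Y = Y1 + Y2" "dlm {#Fm a#} Y1" "dlm {#Fm b#} Y2" using dlm_split by blast
  then have "Y = {#Fm a#} + {#Fm b#}" using dlm_Fm by blast
  then show ?thesis using e by simp
qed

lemma fill_dec_Fm: "dlm (fill G {#Fm a#}) Y \<Longrightarrow> \<exists>G'. Y = fill G' {#Fm a#} \<and> dlc G G'"
  using fill_dec dlm_Fm by blast

lemma main_dl: "deriv CA X \<Longrightarrow> dlm X Y \<Longrightarrow> deriv CA Y"
proof (induction arbitrary: Y rule: deriv.induct)
  case (ax G a)
  obtain G' X' where f: "Y = fill G' X'" "dlm {#Fm (NAt a), Fm (At a)#} X'" using fill_dec[OF ax.prems] by blast
  have Y: "Y = fill G' {#Fm (NAt a), Fm (At a)#}" using f dlm_Fm2 by blast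
  have w: "\<forall>y\<in>#Y. wf_item y" using dlm_pres[OF ax.prems ax.hyps(1)] dli_pres by blast
  have e: "\<forall>y\<in>#Y. empty_ann y" using dlm_pres[OF ax.prems ax.hyps(2)] dli_pres by blast
  show ?case using deriv.ax[of G' a] w e unfolding Y by blast
next
  case (conj G1 G2 G A x B y)
  obtain G' where g: "Y = fill G' {#Fm (And A B)#}" "dlc G G'" using fill_dec_Fm[OF conj.prems] by blast
  obtain G1' G2' where m: "merge_ctx G1' G2' G'" "dlc G1 G1'" "dlc G2 G2'" using merge_ctx_dl[OF conj.hyps(1) g(2)] by blast
  have d1: "deriv CA (fill G1' {#x#})" using conj.IH(1)[OF fill_comp[OF m(2) dlm_refl]] .
  have d2: "deriv CA (fill G2' {#y#})" using conj.IH(2)[OF fill_comp[OF m(3) dlm_refl]] .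
  show ?case unfolding g(1) by (rule deriv.conj[OF m(1) conj.hyps(2) conj.hyps(3) d1 d2])
next
  case (disj A x B y G)
  obtain G' where g: "Y = fill G' {#Fm (Or A B)#}" "dlc G G'" using fill_dec_Fm[OF disj.prems] by blast
  have "deriv CA (fill G' {#x, y#})" using disj.IH[OF fill_comp[OF g(2) dlm_refl]] .
  then show ?case unfolding g(1) by (rule deriv.disj[OF disj.hyps(1) disj.hyps(2)])
next
  case (box A x G S)
  obtain G' where g: "Y = fill G' {#Fm (Box A)#}" "dlc G G'" using fill_dec_Fm[OF box.prems] by blast
  have "deriv CA (fill G' {#Br {#Di (neg A) S, x#} A#})" using box.IH[OF fill_comp[OF g(2) dlm_refl]] .
  then show ?case unfolding g(1) by (rule deriv.box[OF box.hyps(1)])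
next
  case (dia A x G S D M B)
  have p: "dlm (fill G ({#Di A (finsert B S)#} + fill D {#Br M B#})) Y" using dia.prems by simp
  obtain G' X' where g: "Y = fill G' X'" "dlc G G'"
    "dlm ({#Di A (finsert B S)#} + fill D {#Br M B#}) X'" using fill_dec[OF p] by blast
  obtain Y1 Y2 where y: "X' = Y1 + Y2" "dlm {#Di A (finsert B S)#} Y1" "dlm (fill D {#Br M B#}) Y2"
    using dlm_split[OF g(3)] by blast
  have y1: "Y1 = {#Di A (finsert B S)#}" using dlm_single[OF y(2)] dli_inv[of "Di A (finsert B S)"] by auto
  obtain D' Z where d: "Y2 = fill D' Z" "dlc D D'" "dlm {#Br M B#} Z" using fill_dec[OF y(3)] by blast
  obtain z where z: "Z = {#z#}" "dli (Br M B) z" using dlm_single[OF d(3)] by auto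
  obtain M' where z2: "z = Br M' B" "dlm M M'" using dli_inv[OF z(2)] by auto
  have "dlm (add_mset x M) (add_mset x M')"
    using dlm_union[OF dlm_refl[of "{#x#}"] z2(2)] by simp
  then have "dlm (fill D {#Br (add_mset x M) B#}) (fill D' {#Br (add_mset x M') B#})"
    using fill_comp[OF d(2) dlm_single_intro[OF dli_Br]] by blast
  then have "dlm (add_mset (Di A S) (fill D {#Br (add_mset x M) B#})) (add_mset (Di A S) (fill D' {#Br (add_mset x M') B#}))"
    using dlm_union[OF dlm_refl[of "{#Di A S#}"]] by simp
  then have "deriv CA (fill G' (add_mset (Di A S) (fill D' {#Br (add_mset x M') B#})))"
    using dia.IH[OF fill_comp[OF g(2)]] by blast
  then have "deriv CA (fill G' (add_mset (Di A (finsert B S)) (fill D' {#Br M' B#})))"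
    by (rule deriv.dia[OF dia.hyps(1)])
  then show ?case unfolding g(1) y(1) y1 d(1) z(1) z2(1) by simp
next
  case (cut G1 G2 G x y)
  obtain G' X' where f: "Y = fill G' X'" "dlc G G'" "dlm {#} X'" using fill_dec[OF cut.prems] by blast
  have YY: "Y = fill G' {#}" using f dlm_empty by blast
  obtain G1' G2' where m: "merge_ctx G1' G2' G'" "dlc G1 G1'" "dlc G2 G2'" using merge_ctx_dl[OF cut.hyps(1) f(2)] by blast
  have d1: "deriv CA (fill G1' {#x#})" using cut.IH(1)[OF fill_comp[OF m(2) dlm_refl]] .
  have d2: "deriv CA (fill G2' {#y#})" using cut.IH(2)[OF fill_comp[OF m(3) dlm_refl]] .
  show ?case unfolding YY by (rule deriv.cut[OF m(1) cut.hyps(2) cut.hyps(3) d1 d2])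
qed

theorem mainTheorem10:
  fixes A :: fm and G :: ctx
  assumes "deriv A (fill G {# Di (neg A) {||} #})"
  shows "\<exists>G'. erase_ctx G' = erase_ctx G \<and> deriv A (fill G' {#})"
proof -
  have "dlm (fill G {# Di (neg A) {||} #}) (fill G {#})"
    using fill_comp[OF dlc_refl dlm_del] by simp
  then show ?thesis using main_dl assms by blast
qed

end
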